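(* Let $h\ge r$ be positive integers and let $0<\beta<1$ be a real. There is a positive real $\alpha$ depending on $h,r,\beta$ such that the following holds. Let $G$ be any graph on $n$ vertices and let $p=p_r(G)$. For $i,j\in[h]$ let $\mathcal{A}^*_{i,j}$ denote the set of $i$-good sequences of length $j$ relative to $(\alpha,\beta,h,r)$ in $V(G)$ that have no repeated element. If $p>4jn^{-1/r}$, then for each $i\in[h]$ and $r\le j\le h$, \[\sum_{S\in\mathcal{A}^*_{i,j}}|N(S)|^r\ge\left(\frac{1}{2^{j+1}}-\beta\right)n^{j+r}p^{jr}.\]
   Context: All graphs are finite and simple. For a positive integer $r$, $p_r(G)=t_{K_{1,r}}(G)^{1/r}=\frac1n\left(\frac1n\sum_{v\in V(G)}d(v)^r\right)^{1/r}$ where $n=|G|$. A sequence in a set $W$ is a finite sequence of elements of $W$ (repetitions allowed); its length $|S|$ counts multiplicity; $W^k$ denotes the set of sequences of length $k$ in $W$. For a sequence $S$ in $V(G)$, $N(S)$ is the set of vertices adjacent to every vertex of $S$. Goodness: fix reals $0<\alpha,\beta<1$ and positive integers $h,r$, and let $p=p_r(G)$. A sequence $T$ in $V(G)$ is $0$-good if $|N(T)|\ge\alpha p^{|T|}n$. For $1\le i\le h$, a sequence $S$ in $V(G)$ of length at most $h$ is $i$-good if $S$ is $0$-good and for each $|S|\le k\le h$, the number of $(i-1)$-good sequences in $N(S)^k$ is at least $(1-\beta)|N(S)|^k$. These are called $i$-good relative to $(\alpha,\beta,h,r)$. *)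

theory Defs
  imports Complex_Main
begin

definition simple_graph :: "'a set \<Rightarrow> ('a \<Rightarrow> 'a \<Rightarrow> bool) \<Rightarrow> bool" where
  "simple_graph V E \<longleftrightarrow> finite V \<and> (\<forall>u v. E u v \<longrightarrow> u \<in> V \<and> v \<in> V)
     \<and> (\<forall>u v. E u v \<longrightarrow> E v u) \<and> (\<forall>v. \<not> E v v)"

definition degree :: "'a set \<Rightarrow> ('a \<Rightarrow> 'a \<Rightarrow> bool) \<Rightarrow> 'a \<Rightarrow> nat" where
  "degree V E v = card {u \<in> V. E v u}"

definition p_r :: "nat \<Rightarrow> 'a set \<Rightarrow> ('a \<Rightarrow> 'a \<Rightarrow> bool) \<Rightarrow> real" where
  "p_r r V E = (1 / real (card V)) *
     ((1 / real (card V)) * (\<Sum>v\<in>V. real (degree V E v) ^ r)) powr (1 / real r)"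

definition nbhd :: "'a set \<Rightarrow> ('a \<Rightarrow> 'a \<Rightarrow> bool) \<Rightarrow> 'a list \<Rightarrow> 'a set" where
  "nbhd V E S = {v \<in> V. \<forall>u \<in> set S. E u v}"

definition seqs :: "'a set \<Rightarrow> nat \<Rightarrow> 'a list set" where
  "seqs W k = {xs. set xs \<subseteq> W \<and> length xs = k}"

fun good :: "real \<Rightarrow> real \<Rightarrow> nat \<Rightarrow> nat \<Rightarrow> 'a set \<Rightarrow> ('a \<Rightarrow> 'a \<Rightarrow> bool)
             \<Rightarrow> nat \<Rightarrow> 'a list \<Rightarrow> bool" where
  "good \<alpha> \<beta> h r V E 0 T \<longleftrightarrow>
     real (card (nbhd V E T)) \<ge> \<alpha> * p_r r V E ^ length T * real (card V)"
| "good \<alpha> \<beta> h r V E (Suc i) S \<longleftrightarrow>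
     length S \<le> h \<and> good \<alpha> \<beta> h r V E 0 S \<and>
     (\<forall>k. length S \<le> k \<and> k \<le> h \<longrightarrow>
        real (card {T \<in> seqs (nbhd V E S) k. good \<alpha> \<beta> h r V E i T})
          \<ge> (1 - \<beta>) * real (card (nbhd V E S)) ^ k)"

end

theory Submission imports Defs "HOL-Analysis.Analysis" begin

lemma seqs_finite: "finite W \<Longrightarrow> finite (seqs W k)"
  unfolding seqs_def by (rule finite_lists_length_eq)

lemma seqs_card: "finite W \<Longrightarrow> card (seqs W k) = card W ^ k"
  unfolding seqs_def by (rule card_lists_length_eq)

lemma double_count:
  assumes "finite A" "finite B"
  shows "(\<Sum>a\<in>A. card {b\<in>B. R a b}) = (\<Sum>b\<in>B. card {a\<in>A. R a b})"
proof -
  have "(\<Sum>a\<in>A. card {b\<in>B. R a b}) = (\<Sum>a\<in>A. \<Sum>b\<in>B. if R a b then 1 else 0)"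
    using assms by (simp add: sum.If_cases Int_def conj_commute)
  also have "\<dots> = (\<Sum>b\<in>B. \<Sum>a\<in>A. if R a b then 1 else 0)" by (rule sum.swap)
  also have "\<dots> = (\<Sum>b\<in>B. card {a\<in>A. R a b})"
    using assms by (simp add: sum.If_cases Int_def conj_commute)
  finally show ?thesis .
qed

definition adj :: "('a \<Rightarrow> 'a \<Rightarrow> bool) \<Rightarrow> 'a list \<Rightarrow> 'a list \<Rightarrow> bool" where
  "adj E T U \<longleftrightarrow> (\<forall>t\<in>set T. \<forall>u\<in>set U. E t u)"

lemma seqs_nbhd: "seqs (nbhd V E T) k = {U \<in> seqs V k. adj E T U}"
  unfolding seqs_def nbhd_def adj_def by auto

lemma seqs_nbhd': "simple_graph V E \<Longrightarrow> seqs (nbhd V E U) k = {T \<in> seqs V k. adj E T U}"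
  unfolding seqs_def nbhd_def adj_def simple_graph_def by blast

lemma nbhd_sub: "nbhd V E T \<subseteq> V" unfolding nbhd_def by auto

lemma DC:
  assumes G: "simple_graph V E"
  shows "(\<Sum>T\<in>seqs V a. card {U\<in>seqs (nbhd V E T) b. P U})
       = (\<Sum>U\<in>{U\<in>seqs V b. P U}. card (nbhd V E U) ^ a)"
proof -
  have fin: "finite V" using G simple_graph_def by auto
  have "(\<Sum>T\<in>seqs V a. card {U\<in>seqs (nbhd V E T) b. P U})
      = (\<Sum>T\<in>seqs V a. card {U\<in>seqs V b. adj E T U \<and> P U})"
    by (simp add: seqs_nbhd conj_assoc)
  also have "\<dots> = (\<Sum>U\<in>seqs V b. card {T\<in>seqs V a. adj E T U \<and> P U})"
    by (rule double_count) (auto simp: seqs_finite fin)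
  also have "\<dots> = (\<Sum>U\<in>seqs V b. if P U then card {T\<in>seqs V a. adj E T U} else 0)"
    by (rule sum.cong) auto
  also have "\<dots> = (\<Sum>U\<in>{U\<in>seqs V b. P U}. card {T\<in>seqs V a. adj E T U})"
    by (simp add: sum.If_cases seqs_finite fin Int_def conj_commute)
  also have "\<dots> = (\<Sum>U\<in>{U\<in>seqs V b. P U}. card (nbhd V E U) ^ a)"
    apply (rule sum.cong, simp)
    using seqs_nbhd'[OF G] seqs_card finite_subset[OF nbhd_sub fin] by metis
  finally show ?thesis .
qed


lemma card_split: "finite S \<Longrightarrow> card {U\<in>S. P U} + card {U\<in>S. \<not> P U} = card S"
proof -
  assume f: "finite S"
  have "S = {U\<in>S. P U} \<union> {U\<in>S. \<not> P U}" by auto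
  then have "card S = card ({U\<in>S. P U} \<union> {U\<in>S. \<not> P U})" by simp
  also have "\<dots> = card {U\<in>S. P U} + card {U\<in>S. \<not> P U}"
    by (rule card_Un_disjoint) (use f in auto)
  finally show ?thesis by simp
qed

lemma p_nonneg: "p_r r V E \<ge> 0"
  unfolding p_r_def by simp

lemma level0:
  assumes G: "simple_graph V E" and a: "0 \<le> \<alpha>" "\<alpha> \<le> 1" and m: "1 \<le> m"
  shows "(\<Sum>T\<in>{T\<in>seqs V j. \<not> good \<alpha> \<beta> h r V E 0 T}. real (card (nbhd V E T)) ^ m)
     \<le> \<alpha> * real (card V) ^ (j + m) * p_r r V E ^ (j * m)"
proof -
  let ?p = "p_r r V E" and ?N = "real (card V)"
  have fin: "finite V" using G simple_graph_def by auto
  have "(\<Sum>T\<in>{T\<in>seqs V j. \<not> good \<alpha> \<beta> h r V E 0 T}. real (card (nbhd V E T)) ^ m)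
      \<le> real (card {T\<in>seqs V j. \<not> good \<alpha> \<beta> h r V E 0 T}) * (\<alpha> * ?p ^ j * ?N) ^ m"
  proof (rule sum_bounded_above)
    fix T assume "T \<in> {T\<in>seqs V j. \<not> good \<alpha> \<beta> h r V E 0 T}"
    then have "real (card (nbhd V E T)) \<le> \<alpha> * ?p ^ j * ?N" "length T = j"
      by (auto simp: seqs_def)
    then show "real (card (nbhd V E T)) ^ m \<le> (\<alpha> * ?p ^ j * ?N) ^ m"
      by (intro power_mono) auto
  qed
  also have "\<dots> \<le> ?N ^ j * (\<alpha> * ?p ^ j * ?N) ^ m"
  proof (rule mult_right_mono)
    have "card {T\<in>seqs V j. \<not> good \<alpha> \<beta> h r V E 0 T} \<le> card (seqs V j)"
      by (rule card_mono) (auto simp: seqs_finite fin)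
    then show "real (card {T\<in>seqs V j. \<not> good \<alpha> \<beta> h r V E 0 T}) \<le> ?N ^ j"
      by (simp add: seqs_card fin flip: of_nat_power)
    show "0 \<le> (\<alpha> * ?p ^ j * ?N) ^ m" using a p_nonneg[of r V E] by simp
  qed
  also have "\<dots> = \<alpha> ^ m * ?N ^ (j + m) * ?p ^ (j * m)"
    by (simp add: power_mult_distrib power_add power_mult)
  also have "\<dots> \<le> \<alpha> * ?N ^ (j + m) * ?p ^ (j * m)"
  proof (rule mult_right_mono, rule mult_right_mono)
    show "\<alpha> ^ m \<le> \<alpha>" using a m by (simp add: power_le_one_iff power_decreasing[of 1 m \<alpha>, simplified])
  qed (use p_nonneg[of r V E] in auto)
  finally show ?thesis .
qed

lemma aux_eq: "Y > 0 \<Longrightarrow> d > 0 \<Longrightarrow> (b::real) > 0 \<Longrightarrow> e * (M * Y) / b / (d * Y) = e / (b * d) * M"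
  by (simp add: field_simps)

lemma Bk_bound:
  assumes G: "simple_graph V E" and pp: "p_r r V E > 0" and nn: "card V > 0"
    and d: "0 < \<delta>" "\<delta> \<le> 1" and b: "0 < \<beta>" and e: "0 \<le> \<epsilon>"
    and m1: "1 \<le> m" and mj: "m \<le> j" and jk: "j \<le> k" and kh: "k \<le> h"
    and IH: "(\<Sum>U\<in>{U\<in>seqs V k. \<not> good \<alpha> \<beta> h r V E i U}. real (card (nbhd V E U)) ^ j)
              \<le> \<epsilon> * real (card V) ^ (k + j) * p_r r V E ^ (k * j)"
  shows "(\<Sum>T\<in>{T\<in>seqs V j. real (card {U\<in>seqs (nbhd V E T) k. good \<alpha> \<beta> h r V E i U})
                < (1 - \<beta>) * real (card (nbhd V E T)) ^ k}. real (card (nbhd V E T)) ^ m)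
     \<le> (\<delta> + \<epsilon> / (\<beta> * \<delta> ^ h)) * real (card V) ^ (j + m) * p_r r V E ^ (j * m)"
proof -
  let ?p = "p_r r V E" and ?N = "real (card V)"
  let ?f = "\<lambda>T. real (card (nbhd V E T))"
  define B where "B = {T\<in>seqs V j. real (card {U\<in>seqs (nbhd V E T) k. good \<alpha> \<beta> h r V E i U})
                < (1 - \<beta>) * ?f T ^ k}"
  define D where "D = \<delta> * ?p ^ j * ?N"
  define M where "M = ?N ^ (j + m) * ?p ^ (j * m)"
  have fin: "finite V" using G simple_graph_def by auto
  have Mnn: "0 \<le> M" unfolding M_def using pp by (intro mult_nonneg_nonneg zero_le_power) auto
  have finB: "finite B" unfolding B_def by (simp add: seqs_finite fin)
  have Dpos: "D > 0" unfolding D_def using d pp nn by simp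
  have Bsub: "B \<subseteq> seqs V j" unfolding B_def by auto
  have cardB: "real (card B) \<le> ?N ^ j"
  proof -
    have "card B \<le> card (seqs V j)" by (rule card_mono) (use Bsub in \<open>auto simp: seqs_finite fin\<close>)
    then show ?thesis by (simp add: seqs_card fin flip: of_nat_power)
  qed
  have split: "(\<Sum>T\<in>B. ?f T ^ m) = (\<Sum>T\<in>B \<inter> {T. ?f T \<le> D}. ?f T ^ m) + (\<Sum>T\<in>B - {T. ?f T \<le> D}. ?f T ^ m)"
    by (rule sum.Int_Diff) (rule finB)
  have part1: "(\<Sum>T\<in>B \<inter> {T. ?f T \<le> D}. ?f T ^ m) \<le> \<delta> * M"
  proof -
    have "(\<Sum>T\<in>B \<inter> {T. ?f T \<le> D}. ?f T ^ m) \<le> real (card (B \<inter> {T. ?f T \<le> D})) * D ^ m"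
      by (rule sum_bounded_above) (auto intro: power_mono)
    also have "\<dots> \<le> ?N ^ j * D ^ m"
    proof (rule mult_right_mono)
      have "card (B \<inter> {T. ?f T \<le> D}) \<le> card B" by (rule card_mono) (auto simp: finB)
      then show "real (card (B \<inter> {T. ?f T \<le> D})) \<le> ?N ^ j" using cardB by linarith
    qed (use Dpos in simp)
    also have "\<dots> = \<delta> ^ m * M" unfolding D_def M_def
      by (simp add: power_mult_distrib power_add power_mult)
    also have "\<dots> \<le> \<delta> * M"
    proof (rule mult_right_mono)
      show "\<delta> ^ m \<le> \<delta>"
      proof (cases m)
        case 0 
        then show ?thesis using m1 by simp
      next
        case (Suc m') then show ?thesis using d by (simp add: mult_left_le power_le_one)
      qed
    qed (rule Mnn)
    finally show ?thesis .
  qed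
  have Bk: "\<beta> * (\<Sum>T\<in>B. ?f T ^ k) \<le> \<epsilon> * ?N ^ (k + j) * ?p ^ (k * j)"
  proof -
    have "\<beta> * (\<Sum>T\<in>B. ?f T ^ k) = (\<Sum>T\<in>B. \<beta> * ?f T ^ k)" by (simp add: sum_distrib_left)
    also have "\<dots> \<le> (\<Sum>T\<in>B. real (card {U\<in>seqs (nbhd V E T) k. \<not> good \<alpha> \<beta> h r V E i U}))"
    proof (rule sum_mono)
      fix T assume T: "T \<in> B"
      have "card {U\<in>seqs (nbhd V E T) k. good \<alpha> \<beta> h r V E i U}
          + card {U\<in>seqs (nbhd V E T) k. \<not> good \<alpha> \<beta> h r V E i U} = card (seqs (nbhd V E T) k)"
        by (rule card_split) (simp add: seqs_finite finite_subset[OF nbhd_sub fin])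
      also have "\<dots> = card (nbhd V E T) ^ k" by (simp add: seqs_card finite_subset[OF nbhd_sub fin])
      finally have eq: "card {U\<in>seqs (nbhd V E T) k. good \<alpha> \<beta> h r V E i U}
          + card {U\<in>seqs (nbhd V E T) k. \<not> good \<alpha> \<beta> h r V E i U} = card (nbhd V E T) ^ k" .
      have "real (card {U\<in>seqs (nbhd V E T) k. good \<alpha> \<beta> h r V E i U})
          + real (card {U\<in>seqs (nbhd V E T) k. \<not> good \<alpha> \<beta> h r V E i U}) = ?f T ^ k"
        by (simp only: of_nat_add[symmetric] of_nat_power[symmetric] eq)
      moreover have "real (card {U\<in>seqs (nbhd V E T) k. good \<alpha> \<beta> h r V E i U}) < (1 - \<beta>) * ?f T ^ k"
        using T unfolding B_def by auto
      ultimately show "\<beta> * ?f T ^ k \<le> real (card {U\<in>seqs (nbhd V E T) k. \<not> good \<alpha> \<beta> h r V E i U})"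
        by (simp add: algebra_simps)
    qed
    also have "\<dots> \<le> (\<Sum>T\<in>seqs V j. real (card {U\<in>seqs (nbhd V E T) k. \<not> good \<alpha> \<beta> h r V E i U}))"
      by (rule sum_mono2) (auto simp: Bsub seqs_finite fin)
    also have "\<dots> = real (\<Sum>T\<in>seqs V j. card {U\<in>seqs (nbhd V E T) k. \<not> good \<alpha> \<beta> h r V E i U})"
      by simp
    also have "\<dots> = real (\<Sum>U\<in>{U\<in>seqs V k. \<not> good \<alpha> \<beta> h r V E i U}. card (nbhd V E U) ^ j)"
      by (simp only: DC[OF G])
    also have "\<dots> = (\<Sum>U\<in>{U\<in>seqs V k. \<not> good \<alpha> \<beta> h r V E i U}. real (card (nbhd V E U)) ^ j)"
      by simp
    finally show ?thesis using IH by linarith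
  qed
  have part2: "(\<Sum>T\<in>B - {T. ?f T \<le> D}. ?f T ^ m) \<le> \<epsilon> / (\<beta> * \<delta> ^ h) * M"
  proof -
    have "(\<Sum>T\<in>B - {T. ?f T \<le> D}. ?f T ^ m) \<le> (\<Sum>T\<in>B - {T. ?f T \<le> D}. ?f T ^ k / D ^ (k - m))"
    proof (rule sum_mono)
      fix T assume "T \<in> B - {T. ?f T \<le> D}"
      then have fD: "?f T > D" by auto
      have "?f T ^ m * D ^ (k - m) \<le> ?f T ^ m * ?f T ^ (k - m)"
        by (rule mult_left_mono) (use fD Dpos in \<open>auto intro: power_mono\<close>)
      also have "\<dots> = ?f T ^ k" using mj jk by (simp flip: power_add)
      finally have "?f T ^ m * D ^ (k - m) \<le> ?f T ^ k" .
      then show "?f T ^ m \<le> ?f T ^ k / D ^ (k - m)" using Dpos by (subst pos_le_divide_eq) auto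
    qed
    also have "\<dots> = (\<Sum>T\<in>B - {T. ?f T \<le> D}. ?f T ^ k) / D ^ (k - m)" by (simp add: sum_divide_distrib)
    also have "\<dots> \<le> (\<Sum>T\<in>B. ?f T ^ k) / D ^ (k - m)"
      by (rule divide_right_mono, rule sum_mono2) (use Dpos finB in auto)
    also have "\<dots> \<le> (\<epsilon> * ?N ^ (k + j) * ?p ^ (k * j) / \<beta>) / D ^ (k - m)"
    proof (rule divide_right_mono)
      show "(\<Sum>T\<in>B. ?f T ^ k) \<le> \<epsilon> * ?N ^ (k + j) * ?p ^ (k * j) / \<beta>"
        using Bk b by (subst pos_le_divide_eq) (auto simp: mult.commute)
    qed (use Dpos in simp)
    also have "\<dots> = \<epsilon> / (\<beta> * \<delta> ^ (k - m)) * M"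
    proof -
      have e1: "?N ^ (k + j) * ?p ^ (k * j) = M * (?p ^ j * ?N) ^ (k - m)"
      proof -
        have kj: "k + j = (j + m) + (k - m)" using mj jk by simp
        have "?N ^ (k + j) = ?N ^ (j + m) * ?N ^ (k - m)" by (subst kj) (simp only: power_add)
        moreover have "?p ^ (k * j) = ?p ^ (j * m) * (?p ^ j) ^ (k - m)"
        proof -
          have "k * j = j * m + j * (k - m)" using mj jk by (simp add: algebra_simps diff_mult_distrib2)
          then show ?thesis by (simp add: power_add power_mult)
        qed
        ultimately show ?thesis unfolding M_def by (simp add: power_mult_distrib)
      qed
      have e2: "D ^ (k - m) = \<delta> ^ (k - m) * (?p ^ j * ?N) ^ (k - m)"
        unfolding D_def by (simp add: power_mult_distrib mult.assoc)
      have Xp: "(?p ^ j * ?N) ^ (k - m) > 0" using pp nn by simp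
      have "\<epsilon> * ?N ^ (k + j) * ?p ^ (k * j) = \<epsilon> * (?N ^ (k + j) * ?p ^ (k * j))" by (simp only: mult.assoc)
      also have "\<dots> = \<epsilon> * (M * (?p ^ j * ?N) ^ (k - m))" by (simp only: e1)
      finally have e3: "\<epsilon> * ?N ^ (k + j) * ?p ^ (k * j) = \<epsilon> * (M * (?p ^ j * ?N) ^ (k - m))" .
      show ?thesis unfolding e3 e2 by (rule aux_eq) (use Xp d b in auto)
    qed
    also have "\<dots> \<le> \<epsilon> / (\<beta> * \<delta> ^ h) * M"
    proof (rule mult_right_mono)
      have "\<delta> ^ h \<le> \<delta> ^ (k - m)" using d kh by (intro power_decreasing) auto
      then show "\<epsilon> / (\<beta> * \<delta> ^ (k - m)) \<le> \<epsilon> / (\<beta> * \<delta> ^ h)"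
        using d b e by (intro divide_left_mono mult_left_mono mult_pos_pos) auto
    qed (rule Mnn)
    finally show ?thesis .
  qed
  have "(\<Sum>T\<in>B. ?f T ^ m) \<le> (\<delta> + \<epsilon> / (\<beta> * \<delta> ^ h)) * M"
    using split part1 part2 by (simp add: distrib_right)
  then show ?thesis unfolding B_def M_def by (simp add: mult.assoc)
qed


lemma step_level:
  assumes G: "simple_graph V E" and pp: "p_r r V E > 0" and nn: "card V > 0"
    and a: "0 < \<alpha>" "\<alpha> \<le> 1" and d: "0 < \<delta>" "\<delta> \<le> 1" and b: "0 < \<beta>" and e: "0 \<le> \<epsilon>"
    and IH: "\<forall>m k. 1 \<le> m \<and> m \<le> k \<and> k \<le> h \<longrightarrow>
       (\<Sum>U\<in>{U\<in>seqs V k. \<not> good \<alpha> \<beta> h r V E i U}. real (card (nbhd V E U)) ^ m)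
              \<le> \<epsilon> * real (card V) ^ (k + m) * p_r r V E ^ (k * m)"
    and m1: "1 \<le> m" and mj: "m \<le> j" and jh: "j \<le> h"
  shows "(\<Sum>T\<in>{T\<in>seqs V j. \<not> good \<alpha> \<beta> h r V E (Suc i) T}. real (card (nbhd V E T)) ^ m)
     \<le> (\<alpha> + real h * (\<delta> + \<epsilon> / (\<beta> * \<delta> ^ h))) * real (card V) ^ (j + m) * p_r r V E ^ (j * m)"
proof -
  let ?p = "p_r r V E" and ?N = "real (card V)"
  let ?f = "\<lambda>T. real (card (nbhd V E T))"
  define M where "M = ?N ^ (j + m) * ?p ^ (j * m)"
  define C where "C = \<delta> + \<epsilon> / (\<beta> * \<delta> ^ h)"
  define Bk where "Bk = (\<lambda>k. {T\<in>seqs V j. real (card {U\<in>seqs (nbhd V E T) k. good \<alpha> \<beta> h r V E i U})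
                < (1 - \<beta>) * ?f T ^ k})"
  define g where "g = (\<lambda>T. (if \<not> good \<alpha> \<beta> h r V E 0 T then ?f T ^ m else 0)
      + (\<Sum>k\<in>{j..h}. if T \<in> Bk k then ?f T ^ m else 0))"
  have fin: "finite V" using G simple_graph_def by auto
  have finS: "finite (seqs V j)" by (simp add: seqs_finite fin)
  have Cnn: "0 \<le> C" unfolding C_def using d b e by simp
  have gnn: "\<And>T. 0 \<le> g T" unfolding g_def by (intro add_nonneg_nonneg sum_nonneg) auto
  have "(\<Sum>T\<in>{T\<in>seqs V j. \<not> good \<alpha> \<beta> h r V E (Suc i) T}. ?f T ^ m)
      \<le> (\<Sum>T\<in>{T\<in>seqs V j. \<not> good \<alpha> \<beta> h r V E (Suc i) T}. g T)"
  proof (rule sum_mono)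
    fix T assume T: "T \<in> {T\<in>seqs V j. \<not> good \<alpha> \<beta> h r V E (Suc i) T}"
    then have lT: "length T = j" and ng: "\<not> good \<alpha> \<beta> h r V E (Suc i) T" by (auto simp: seqs_def)
    show "?f T ^ m \<le> g T"
    proof (cases "good \<alpha> \<beta> h r V E 0 T")
      case False
      then show ?thesis unfolding g_def by (auto intro: sum_nonneg)
    next
      case True
      with ng lT jh obtain k where k: "j \<le> k" "k \<le> h"
        and lt: "\<not> (real (card {T' \<in> seqs (nbhd V E T) k. good \<alpha> \<beta> h r V E i T'}) \<ge> (1 - \<beta>) * ?f T ^ k)"
        by auto
      then have TB: "T \<in> Bk k" unfolding Bk_def using T by auto
      have "?f T ^ m = (if T \<in> Bk k then ?f T ^ m else 0)" using TB by simp
      also have "\<dots> \<le> (\<Sum>k\<in>{j..h}. if T \<in> Bk k then ?f T ^ m else 0)"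
        by (rule member_le_sum) (use k in auto)
      also have "\<dots> \<le> g T" unfolding g_def by simp
      finally show ?thesis .
    qed
  qed
  also have "\<dots> \<le> (\<Sum>T\<in>seqs V j. g T)"
    by (rule sum_mono2) (use finS gnn in auto)
  also have "\<dots> = (\<Sum>T\<in>seqs V j. if \<not> good \<alpha> \<beta> h r V E 0 T then ?f T ^ m else 0)
      + (\<Sum>k\<in>{j..h}. \<Sum>T\<in>seqs V j. if T \<in> Bk k then ?f T ^ m else 0)"
    unfolding g_def by (simp add: sum.distrib sum.swap[of _ "{j..h}"])
  also have "\<dots> = (\<Sum>T\<in>{T\<in>seqs V j. \<not> good \<alpha> \<beta> h r V E 0 T}. ?f T ^ m)
      + (\<Sum>k\<in>{j..h}. \<Sum>T\<in>Bk k. ?f T ^ m)"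
  proof -
    have "\<And>k. (\<Sum>T\<in>seqs V j. if T \<in> Bk k then ?f T ^ m else 0) = (\<Sum>T\<in>Bk k. ?f T ^ m)"
    proof -
      fix k
      have "(\<Sum>T\<in>Bk k. ?f T ^ m) = (\<Sum>T\<in>{T\<in>seqs V j. T \<in> Bk k}. ?f T ^ m)"
        unfolding Bk_def by (rule sum.cong) auto
      also have "\<dots> = (\<Sum>T\<in>seqs V j. if T \<in> Bk k then ?f T ^ m else 0)"
        by (rule sum.inter_filter[OF finS])
      finally show "(\<Sum>T\<in>seqs V j. if T \<in> Bk k then ?f T ^ m else 0) = (\<Sum>T\<in>Bk k. ?f T ^ m)" by simp
    qed
    moreover have "(\<Sum>T\<in>seqs V j. if \<not> good \<alpha> \<beta> h r V E 0 T then ?f T ^ m else 0)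
        = (\<Sum>T\<in>{T\<in>seqs V j. \<not> good \<alpha> \<beta> h r V E 0 T}. ?f T ^ m)"
      by (rule sum.inter_filter[OF finS, symmetric])
    ultimately show ?thesis by simp
  qed
  also have "\<dots> \<le> \<alpha> * M + (\<Sum>k\<in>{j..h}. C * M)"
  proof (rule add_mono)
    show "(\<Sum>T\<in>{T\<in>seqs V j. \<not> good \<alpha> \<beta> h r V E 0 T}. ?f T ^ m) \<le> \<alpha> * M"
      unfolding M_def using level0[OF G _ a(2) m1, of j \<beta> h] a by (simp add: mult.assoc)
    show "(\<Sum>k\<in>{j..h}. \<Sum>T\<in>Bk k. ?f T ^ m) \<le> (\<Sum>k\<in>{j..h}. C * M)"
    proof (rule sum_mono)
      fix k assume k: "k \<in> {j..h}"
      have IHk: "(\<Sum>U\<in>{U\<in>seqs V k. \<not> good \<alpha> \<beta> h r V E i U}. ?f U ^ j)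
              \<le> \<epsilon> * ?N ^ (k + j) * ?p ^ (k * j)"
        using IH m1 mj k by auto
      show "(\<Sum>T\<in>Bk k. ?f T ^ m) \<le> C * M"
        unfolding Bk_def C_def M_def
        using Bk_bound[OF G pp nn d b e m1 mj _ _ IHk] k by (simp add: mult.assoc)
    qed
  qed
  also have "\<dots> \<le> \<alpha> * M + real h * (C * M)"
  proof -
    have "card {j..h} \<le> h" using m1 mj by simp
    moreover have "0 \<le> C * M" unfolding M_def using Cnn pp by simp
    ultimately have "real (card {j..h}) * (C * M) \<le> real h * (C * M)"
      by (intro mult_right_mono) auto
    then show ?thesis by simp
  qed
  also have "\<dots> = (\<alpha> + real h * C) * M" by (simp add: algebra_simps)
  finally show ?thesis unfolding C_def M_def by (simp add: mult.assoc)
qed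


definition badsum_ok :: "real \<Rightarrow> real \<Rightarrow> nat \<Rightarrow> nat \<Rightarrow> 'a set \<Rightarrow> ('a \<Rightarrow> 'a \<Rightarrow> bool) \<Rightarrow> nat \<Rightarrow> real \<Rightarrow> bool" where
  "badsum_ok \<alpha> \<beta> h r V E i \<eta> \<longleftrightarrow> (\<forall>m k. 1 \<le> m \<and> m \<le> k \<and> k \<le> h \<longrightarrow>
       (\<Sum>U\<in>{U\<in>seqs V k. \<not> good \<alpha> \<beta> h r V E i U}. real (card (nbhd V E U)) ^ m)
              \<le> \<eta> * real (card V) ^ (k + m) * p_r r V E ^ (k * m))"

lemma aux_ineq1:
  fixes h :: real assumes "0 \<le> h" "0 < \<eta>" "\<delta> \<le> \<eta> / (3 * h + 3)" "0 \<le> \<delta>"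
  shows "h * \<delta> \<le> \<eta> / 3"
proof -
  have "h * \<delta> \<le> h * (\<eta> / (3 * h + 3))" using assms by (intro mult_left_mono) auto
  also have "\<dots> \<le> \<eta> / 3" using assms by (simp add: field_simps)
  finally show ?thesis .
qed

lemma aux_ineq2:
  fixes h :: real assumes "0 \<le> h" "0 < \<eta>" "0 < \<beta>" "0 < D" "e \<le> \<eta> * \<beta> * D / (3 * h + 3)" "0 \<le> e"
  shows "h * (e / (\<beta> * D)) \<le> \<eta> / 3"
proof -
  have "e / (\<beta> * D) \<le> \<eta> / (3 * h + 3)"
    using assms by (simp add: field_simps)
  moreover have "0 \<le> e / (\<beta> * D)" using assms by simp
  ultimately show ?thesis by (rule aux_ineq1[OF assms(1) assms(2)])
qed

lemma levels:
  assumes b: "0 < \<beta>"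
  shows "\<forall>\<eta>>0. \<exists>a>0. a \<le> 1 \<and> (\<forall>\<alpha>. 0 < \<alpha> \<and> \<alpha> \<le> a \<longrightarrow>
     (\<forall>(V::'a set) E. simple_graph V E \<and> p_r r V E > 0 \<and> card V > 0 \<longrightarrow>
       (\<forall>i'\<le>i. badsum_ok \<alpha> \<beta> h r V E i' \<eta>)))"
proof (induction i)
  case 0
  show ?case
  proof (intro allI impI)
    fix \<eta> :: real assume eta: "\<eta> > 0"
    show "\<exists>a>0. a \<le> 1 \<and> (\<forall>\<alpha>. 0 < \<alpha> \<and> \<alpha> \<le> a \<longrightarrow>
     (\<forall>(V::'a set) E. simple_graph V E \<and> p_r r V E > 0 \<and> card V > 0 \<longrightarrow>
       (\<forall>i'\<le>0. badsum_ok \<alpha> \<beta> h r V E i' \<eta>)))"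
    proof (intro exI[of _ "min \<eta> 1"] conjI allI impI)
      fix \<alpha> :: real and V :: "'a set" and E and i' :: nat
      assume al: "0 < \<alpha> \<and> \<alpha> \<le> min \<eta> 1" and G: "simple_graph V E \<and> p_r r V E > 0 \<and> card V > 0"
        and i': "i' \<le> 0"
      show "badsum_ok \<alpha> \<beta> h r V E i' \<eta>"
        unfolding badsum_ok_def
      proof (intro allI impI)
        fix m k assume mk: "1 \<le> m \<and> m \<le> k \<and> k \<le> h"
        have "(\<Sum>U\<in>{U\<in>seqs V k. \<not> good \<alpha> \<beta> h r V E 0 U}. real (card (nbhd V E U)) ^ m)
            \<le> \<alpha> * real (card V) ^ (k + m) * p_r r V E ^ (k * m)"
          by (rule level0) (use G al mk in auto)
        also have "\<dots> \<le> \<eta> * real (card V) ^ (k + m) * p_r r V E ^ (k * m)"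
          using al G by (intro mult_right_mono) auto
        finally show "(\<Sum>U\<in>{U\<in>seqs V k. \<not> good \<alpha> \<beta> h r V E i' U}. real (card (nbhd V E U)) ^ m)
            \<le> \<eta> * real (card V) ^ (k + m) * p_r r V E ^ (k * m)" using i' by simp
      qed
    qed (use eta in auto)
  qed
next
  case (Suc i)
  show ?case
  proof (intro allI impI)
    fix \<eta> :: real assume eta: "\<eta> > 0"
    define \<delta> where "\<delta> = min 1 (\<eta> / (3 * real h + 3))"
    have d: "0 < \<delta>" "\<delta> \<le> 1" using eta unfolding \<delta>_def by auto
    define \<epsilon> where "\<epsilon> = min \<eta> (\<eta> * \<beta> * \<delta> ^ h / (3 * real h + 3))"
    have e: "0 < \<epsilon>" using eta b d unfolding \<epsilon>_def by auto
    obtain a0 where a0: "a0 > 0" "a0 \<le> 1" and a0P: "\<forall>\<alpha>. 0 < \<alpha> \<and> \<alpha> \<le> a0 \<longrightarrow>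
     (\<forall>(V::'a set) E. simple_graph V E \<and> p_r r V E > 0 \<and> card V > 0 \<longrightarrow>
       (\<forall>i'\<le>i. badsum_ok \<alpha> \<beta> h r V E i' \<epsilon>))"
      using Suc.IH e by blast
    show "\<exists>a>0. a \<le> 1 \<and> (\<forall>\<alpha>. 0 < \<alpha> \<and> \<alpha> \<le> a \<longrightarrow>
     (\<forall>(V::'a set) E. simple_graph V E \<and> p_r r V E > 0 \<and> card V > 0 \<longrightarrow>
       (\<forall>i'\<le>Suc i. badsum_ok \<alpha> \<beta> h r V E i' \<eta>)))"
    proof (intro exI[of _ "min a0 (\<eta> / 3)"] conjI allI impI)
      fix \<alpha> :: real and V :: "'a set" and E and i' :: nat
      assume al: "0 < \<alpha> \<and> \<alpha> \<le> min a0 (\<eta> / 3)" and G: "simple_graph V E \<and> p_r r V E > 0 \<and> card V > 0"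
        and i': "i' \<le> Suc i"
      have IHa: "\<forall>i'\<le>i. badsum_ok \<alpha> \<beta> h r V E i' \<epsilon>" using a0P al G by auto
      show "badsum_ok \<alpha> \<beta> h r V E i' \<eta>"
      proof (cases "i' \<le> i")
        case True
        then have "badsum_ok \<alpha> \<beta> h r V E i' \<epsilon>" using IHa by auto
        then show ?thesis unfolding badsum_ok_def
        proof (intro allI impI)
          fix m k assume H: "\<forall>m k. 1 \<le> m \<and> m \<le> k \<and> k \<le> h \<longrightarrow>
            (\<Sum>U\<in>{U \<in> seqs V k. \<not> good \<alpha> \<beta> h r V E i' U}. real (card (nbhd V E U)) ^ m)
            \<le> \<epsilon> * real (card V) ^ (k + m) * p_r r V E ^ (k * m)" and mk: "1 \<le> m \<and> m \<le> k \<and> k \<le> h"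
          have "\<epsilon> * real (card V) ^ (k + m) * p_r r V E ^ (k * m) \<le> \<eta> * real (card V) ^ (k + m) * p_r r V E ^ (k * m)"
            using G unfolding \<epsilon>_def by (intro mult_right_mono) auto
          then show "(\<Sum>U\<in>{U \<in> seqs V k. \<not> good \<alpha> \<beta> h r V E i' U}. real (card (nbhd V E U)) ^ m)
            \<le> \<eta> * real (card V) ^ (k + m) * p_r r V E ^ (k * m)" using H mk by fastforce
        qed
      next
        case False
        then have ii: "i' = Suc i" using i' by simp
        have IHi: "\<forall>m k. 1 \<le> m \<and> m \<le> k \<and> k \<le> h \<longrightarrow>
          (\<Sum>U\<in>{U\<in>seqs V k. \<not> good \<alpha> \<beta> h r V E i U}. real (card (nbhd V E U)) ^ m)
              \<le> \<epsilon> * real (card V) ^ (k + m) * p_r r V E ^ (k * m)"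
          using IHa unfolding badsum_ok_def by blast
        have coef: "\<alpha> + real h * (\<delta> + \<epsilon> / (\<beta> * \<delta> ^ h)) \<le> \<eta>"
        proof -
          have 1: "real h * \<delta> \<le> \<eta> / 3"
            by (rule aux_ineq1) (use eta d in \<open>auto simp: \<delta>_def\<close>)
          have 2: "real h * (\<epsilon> / (\<beta> * \<delta> ^ h)) \<le> \<eta> / 3"
            by (rule aux_ineq2) (use eta d b e in \<open>auto simp: \<epsilon>_def\<close>)
          have 3: "\<alpha> \<le> \<eta> / 3" using al by simp
          show ?thesis using 1 2 3 by (simp only: distrib_left)
        qed
        show ?thesis unfolding badsum_ok_def ii
        proof (intro allI impI)
          fix m k assume mk: "1 \<le> m \<and> m \<le> k \<and> k \<le> h"
          have "(\<Sum>T\<in>{T\<in>seqs V k. \<not> good \<alpha> \<beta> h r V E (Suc i) T}. real (card (nbhd V E T)) ^ m)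
             \<le> (\<alpha> + real h * (\<delta> + \<epsilon> / (\<beta> * \<delta> ^ h))) * real (card V) ^ (k + m) * p_r r V E ^ (k * m)"
            by (rule step_level[OF _ _ _ _ _ d b _ IHi]) (use G al a0 e mk in auto)
          also have "\<dots> \<le> \<eta> * real (card V) ^ (k + m) * p_r r V E ^ (k * m)"
            using G coef by (intro mult_right_mono) auto
          finally show "(\<Sum>T\<in>{T\<in>seqs V k. \<not> good \<alpha> \<beta> h r V E (Suc i) T}. real (card (nbhd V E T)) ^ m)
             \<le> \<eta> * real (card V) ^ (k + m) * p_r r V E ^ (k * m)" .
        qed
      qed
    qed (use eta a0 in auto)
  qed
qed


lemma convex_pow_nonneg: "convex_on {0::real..} (\<lambda>x. x ^ n)"
proof (cases "even n")
  case True
  then show ?thesis using convex_on_subset[OF convex_power_even[OF True]] by (auto simp: convex_real_interval)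
next
  case False
  then show ?thesis using convex_power_odd by simp
qed

lemma jensen_pow:
  fixes g :: "'b \<Rightarrow> real"
  assumes A: "finite A" "A \<noteq> {}" and g: "\<forall>x\<in>A. 0 \<le> g x"
  shows "real (card A) * ((\<Sum>x\<in>A. g x) / real (card A)) ^ n \<le> (\<Sum>x\<in>A. g x ^ n)"
proof -
  have c: "real (card A) > 0" using A by (simp add: card_gt_0_iff)
  have "(\<Sum>i\<in>A. (1 / real (card A)) *\<^sub>R g i) ^ n \<le> (\<Sum>i\<in>A. (1 / real (card A)) * g i ^ n)"
    by (rule convex_on_sum[OF A convex_pow_nonneg, where a = "\<lambda>_. 1 / real (card A)"]) (use A g in auto)
  then have "((\<Sum>x\<in>A. g x) / real (card A)) ^ n \<le> (\<Sum>x\<in>A. g x ^ n) / real (card A)"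
    by (simp add: sum_distrib_left[symmetric] sum_divide_distrib[symmetric])
  then show ?thesis using c by (simp add: field_simps)
qed

lemma distinct_count:
  assumes W: "finite W"
  shows "max 0 (real (card W) - real j) ^ j \<le> real (card {S\<in>seqs W j. distinct S})"
proof (cases "j \<le> card W")
  case True
  have eq: "{S\<in>seqs W j. distinct S} = {xs. length xs = j \<and> distinct xs \<and> set xs \<subseteq> W}"
    unfolding seqs_def by auto
  have "(card W - j) ^ j = (\<Prod>x\<in>{card W - j + 1 .. card W}. card W - j)"
    using True by simp
  also have "\<dots> \<le> \<Prod>{card W - j + 1 .. card W}"
    by (rule prod_mono) auto
  also have "\<dots> = card {S\<in>seqs W j. distinct S}"
    unfolding eq by (rule card_lists_distinct_length_eq[OF W True, symmetric])
  finally have "real ((card W - j) ^ j) \<le> real (card {S\<in>seqs W j. distinct S})" by linarith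
  then show ?thesis using True by (simp add: of_nat_diff)
next
  case False
  then show ?thesis by (cases j) auto
qed

lemma sum_deg:
  assumes G: "simple_graph V E"
  shows "(\<Sum>T\<in>seqs V r. card (nbhd V E T)) = (\<Sum>v\<in>V. Defs.degree V E v ^ r)"
proof -
  have fin: "finite V" using G simple_graph_def by auto
  have "(\<Sum>T\<in>seqs V r. card (nbhd V E T)) = (\<Sum>T\<in>seqs V r. card {v\<in>V. \<forall>u\<in>set T. E u v})"
    unfolding nbhd_def by simp
  also have "\<dots> = (\<Sum>v\<in>V. card {T\<in>seqs V r. \<forall>u\<in>set T. E u v})"
    by (rule double_count) (auto simp: fin seqs_finite)
  also have "\<dots> = (\<Sum>v\<in>V. Defs.degree V E v ^ r)"
  proof (rule sum.cong)
    fix v assume "v \<in> V"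
    have "{T\<in>seqs V r. \<forall>u\<in>set T. E u v} = seqs {u\<in>V. E v u} r"
      using G unfolding seqs_def simple_graph_def by blast
    then show "card {T\<in>seqs V r. \<forall>u\<in>set T. E u v} = Defs.degree V E v ^ r"
      unfolding Defs.degree_def by (simp add: seqs_card fin)
  qed simp
  finally show ?thesis .
qed

lemma p_rel:
  assumes n: "card V > 0" and p: "p_r r V E > 0" and r: "r > 0"
  shows "(\<Sum>v\<in>V. real (Defs.degree V E v) ^ r) = real (card V) ^ (r + 1) * p_r r V E ^ r"
proof -
  define X where "X = (\<Sum>v\<in>V. real (Defs.degree V E v) ^ r)"
  define N where "N = real (card V)"
  have Np: "N > 0" using n N_def by simp
  have X0: "X \<ge> 0" unfolding X_def by (simp add: sum_nonneg)
  have pd: "p_r r V E = (1 / N) * (X / N) powr (1 / real r)"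
    unfolding p_r_def X_def N_def by simp
  have Xp: "X / N > 0"
  proof (rule ccontr)
    assume "\<not> X / N > 0"
    moreover have "X / N \<ge> 0" using X0 Np by simp
    ultimately have "X / N = 0" by linarith
    then have "p_r r V E = 0" using pd by (simp only:) simp
    then show False using p by simp
  qed
  have "(N * p_r r V E) ^ r = ((X / N) powr (1 / real r)) ^ r" using pd Np by simp
  also have "\<dots> = ((X / N) powr (1 / real r)) powr real r"
  proof (rule powr_realpow[symmetric])
    have "X / N \<noteq> 0" using Xp by linarith
    then show "0 < (X / N) powr (1 / real r)" by (subst powr_gt_zero)
  qed
  also have "\<dots> = X / N" using r Xp X0 Np by (simp add: powr_powr)
  finally have "(N * p_r r V E) ^ r = X / N" .
  then have "X = N * (N * p_r r V E) ^ r" using Np by (simp add: field_simps)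
  then show ?thesis unfolding X_def N_def by (simp add: power_mult_distrib)
qed

lemma cond_bound:
  assumes n: "card V > 0" and r: "r > 0" and j: "j \<ge> 1"
    and c: "p_r r V E > 4 * real j * real (card V) powr (- 1 / real r)"
  shows "real (card V) * p_r r V E ^ r \<ge> 4 * real j"
proof -
  define N where "N = real (card V)"
  define q where "q = N powr (- 1 / real r)"
  have Np: "N > 0" using n N_def by simp
  have qp: "q > 0" using Np q_def by simp
  have qr: "q ^ r = 1 / N"
  proof -
    have "q ^ r = q powr real r" using qp by (simp add: powr_realpow)
    also have "\<dots> = N powr (-1)" unfolding q_def using r by (simp add: powr_powr)
    also have "\<dots> = 1 / N" using Np by (simp add: powr_minus inverse_eq_divide)
    finally show ?thesis .
  qed
  have "(4 * real j * q) ^ r \<le> p_r r V E ^ r"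
    using c qp j unfolding q_def N_def by (intro power_mono) auto
  then have "(4 * real j) ^ r / N \<le> p_r r V E ^ r" using qr by (simp add: power_mult_distrib field_simps)
  then have "(4 * real j) ^ r \<le> N * p_r r V E ^ r" using Np by (simp add: field_simps)
  moreover have "4 * real j \<le> (4 * real j) ^ r" using j r by (intro self_le_power) auto
  ultimately show ?thesis unfolding N_def by linarith
qed


theorem lemma3p6:
  fixes h r :: nat and \<beta> :: real
  assumes "0 < r" and "r \<le> h" and "0 < \<beta>" and "\<beta> < 1"
  shows "\<exists>\<alpha>::real. 0 < \<alpha> \<and> \<alpha> < 1 \<and>
    (\<forall>(V :: 'a set) E. simple_graph V E \<longrightarrow>
      (\<forall>i j. 1 \<le> i \<and> i \<le> h \<and> r \<le> j \<and> j \<le> h \<and>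
         p_r r V E > 4 * real j * real (card V) powr (- 1 / real r) \<longrightarrow>
         (\<Sum>S \<in> {S \<in> seqs V j. distinct S \<and> good \<alpha> \<beta> h r V E i S}.
             real (card (nbhd V E S)) ^ r)
           \<ge> (1 / 2 ^ (j + 1) - \<beta>) * real (card V) ^ (j + r) * p_r r V E ^ (j * r)))"
proof -
  have L: "\<forall>\<eta>>0. \<exists>a>0. a \<le> 1 \<and> (\<forall>\<alpha>. 0 < \<alpha> \<and> \<alpha> \<le> a \<longrightarrow>
     (\<forall>(V::'a set) E. simple_graph V E \<and> p_r r V E > 0 \<and> card V > 0 \<longrightarrow>
       (\<forall>i'\<le>h. badsum_ok \<alpha> \<beta> h r V E i' \<eta>)))"
    by (rule levels) (rule assms(3))
  then obtain a where a: "a > 0" "a \<le> 1" and aP: "\<forall>\<alpha>. 0 < \<alpha> \<and> \<alpha> \<le> a \<longrightarrow>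
     (\<forall>(V::'a set) E. simple_graph V E \<and> p_r r V E > 0 \<and> card V > 0 \<longrightarrow>
       (\<forall>i'\<le>h. badsum_ok \<alpha> \<beta> h r V E i' \<beta>))"
    using assms(3) by blast
  define \<alpha> where "\<alpha> = min a (1/2)"
  have al: "0 < \<alpha>" "\<alpha> < 1" "\<alpha> \<le> a" using a unfolding \<alpha>_def by auto
  show ?thesis
  proof (intro exI[of _ \<alpha>] conjI allI impI)
    fix V :: "'a set" and E i j
    assume G: "simple_graph V E"
      and H: "1 \<le> i \<and> i \<le> h \<and> r \<le> j \<and> j \<le> h \<and>
         p_r r V E > 4 * real j * real (card V) powr (- 1 / real r)"
    let ?p = "p_r r V E" and ?N = "real (card V)"
    let ?f = "\<lambda>T. real (card (nbhd V E T))"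
    have fin: "finite V" using G simple_graph_def by auto
    have j1: "j \<ge> 1" using H assms(1) by auto
    have r0: "r > 0" using assms(1) .
    have pp: "?p > 0"
    proof -
      have "0 \<le> 4 * real j * ?N powr (- 1 / real r)" by simp
      then show ?thesis using H by linarith
    qed
    have nn: "card V > 0"
    proof (rule ccontr)
      assume "\<not> card V > 0"
      then have "card V = 0" by simp
      then have "?p = 0" unfolding p_r_def by simp
      then show False using pp by simp
    qed
    have Np: "?N > 0" using nn by simp
    define M where "M = ?N ^ (j + r) * ?p ^ (j * r)"
    have Mnn: "M \<ge> 0" unfolding M_def using pp by simp
    have bad: "(\<Sum>S\<in>{S\<in>seqs V j. \<not> good \<alpha> \<beta> h r V E i S}. ?f S ^ r) \<le> \<beta> * M"
    proof -
      have "badsum_ok \<alpha> \<beta> h r V E i \<beta>" using aP al G pp nn H by auto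
      then show ?thesis unfolding badsum_ok_def M_def using H r0 by (auto simp: mult.assoc)
    qed
    define A where "A = {S\<in>seqs V j. distinct S}"
    have finA: "finite A" unfolding A_def by (simp add: seqs_finite fin)
    have S1: "(\<Sum>S \<in> {S \<in> seqs V j. distinct S \<and> good \<alpha> \<beta> h r V E i S}. ?f S ^ r)
        \<ge> (\<Sum>S\<in>A. ?f S ^ r) - \<beta> * M"
    proof -
      have e1: "(\<Sum>S\<in>A. ?f S ^ r) = (\<Sum>S\<in>A \<inter> {S. good \<alpha> \<beta> h r V E i S}. ?f S ^ r)
          + (\<Sum>S\<in>A - {S. good \<alpha> \<beta> h r V E i S}. ?f S ^ r)"
        by (rule sum.Int_Diff[OF finA])
      have e2: "A \<inter> {S. good \<alpha> \<beta> h r V E i S} = {S \<in> seqs V j. distinct S \<and> good \<alpha> \<beta> h r V E i S}"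
        unfolding A_def by auto
      have e3: "(\<Sum>S\<in>A - {S. good \<alpha> \<beta> h r V E i S}. ?f S ^ r)
          \<le> (\<Sum>S\<in>{S\<in>seqs V j. \<not> good \<alpha> \<beta> h r V E i S}. ?f S ^ r)"
        by (rule sum_mono2) (auto simp: A_def seqs_finite fin)
      have e4: "(\<Sum>S\<in>A \<inter> {S. good \<alpha> \<beta> h r V E i S}. ?f S ^ r)
          = (\<Sum>S \<in> {S \<in> seqs V j. distinct S \<and> good \<alpha> \<beta> h r V E i S}. ?f S ^ r)"
        by (simp only: e2)
      show ?thesis using e1 e3 e4 bad by linarith
    qed
    define g where "g = (\<lambda>T. max 0 (?f T - real j))"
    have S2: "(\<Sum>S\<in>A. ?f S ^ r) = (\<Sum>T\<in>seqs V r. real (card {S\<in>seqs (nbhd V E T) j. distinct S}))"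
    proof -
      have "(\<Sum>T\<in>seqs V r. card {S\<in>seqs (nbhd V E T) j. distinct S})
          = (\<Sum>S\<in>{S\<in>seqs V j. distinct S}. card (nbhd V E S) ^ r)"
        by (rule DC[OF G])
      then have "real (\<Sum>T\<in>seqs V r. card {S\<in>seqs (nbhd V E T) j. distinct S})
          = real (\<Sum>S\<in>{S\<in>seqs V j. distinct S}. card (nbhd V E S) ^ r)" by simp
      then show ?thesis unfolding A_def by simp
    qed
    have S3: "(\<Sum>T\<in>seqs V r. real (card {S\<in>seqs (nbhd V E T) j. distinct S})) \<ge> (\<Sum>T\<in>seqs V r. g T ^ j)"
      unfolding g_def
      by (rule sum_mono, rule distinct_count) (rule finite_subset[OF nbhd_sub fin])
    have cardR: "real (card (seqs V r)) = ?N ^ r" by (simp add: seqs_card fin)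
    have S4: "(\<Sum>T\<in>seqs V r. g T ^ j) \<ge> ?N ^ r * ((\<Sum>T\<in>seqs V r. g T) / ?N ^ r) ^ j"
    proof -
      have ne: "seqs V r \<noteq> {}"
      proof
        assume "seqs V r = {}"
        then have "card (seqs V r) = 0" by simp
        then show False using cardR Np by simp
      qed
      show ?thesis using jensen_pow[OF seqs_finite[OF fin] ne, of g j] unfolding cardR g_def by simp
    qed
    have sumf: "(\<Sum>T\<in>seqs V r. ?f T) = ?N ^ (r + 1) * ?p ^ r"
    proof -
      have "(\<Sum>T\<in>seqs V r. ?f T) = real (\<Sum>T\<in>seqs V r. card (nbhd V E T))" by simp
      also have "\<dots> = real (\<Sum>v\<in>V. Defs.degree V E v ^ r)" by (simp only: sum_deg[OF G])
      also have "\<dots> = (\<Sum>v\<in>V. real (Defs.degree V E v) ^ r)" by simp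
      also have "\<dots> = ?N ^ (r + 1) * ?p ^ r" by (rule p_rel[OF nn pp r0])
      finally show ?thesis .
    qed
    have cb: "?N * ?p ^ r \<ge> 4 * real j" by (rule cond_bound[OF nn r0 j1]) (use H in simp)
    have S5: "(\<Sum>T\<in>seqs V r. g T) / ?N ^ r \<ge> 3 / 4 * (?N * ?p ^ r)"
    proof -
      have "(\<Sum>T\<in>seqs V r. g T) \<ge> (\<Sum>T\<in>seqs V r. ?f T - real j)"
        unfolding g_def by (rule sum_mono) simp
      also have "(\<Sum>T\<in>seqs V r. ?f T - real j) = ?N ^ (r + 1) * ?p ^ r - ?N ^ r * real j"
        by (simp add: sum_subtractf sumf cardR)
      finally have "(\<Sum>T\<in>seqs V r. g T) / ?N ^ r \<ge> (?N ^ (r + 1) * ?p ^ r - ?N ^ r * real j) / ?N ^ r"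
        using Np by (intro divide_right_mono) auto
      also have "(?N ^ (r + 1) * ?p ^ r - ?N ^ r * real j) / ?N ^ r = ?N * ?p ^ r - real j"
        using Np by (simp add: field_simps)
      finally show ?thesis using cb by linarith
    qed
    have S6: "?N ^ r * ((\<Sum>T\<in>seqs V r. g T) / ?N ^ r) ^ j \<ge> (3/4) ^ j * M"
    proof -
      have "((\<Sum>T\<in>seqs V r. g T) / ?N ^ r) ^ j \<ge> (3 / 4 * (?N * ?p ^ r)) ^ j"
        by (rule power_mono[OF S5]) (use Np pp in simp)
      then have "?N ^ r * ((\<Sum>T\<in>seqs V r. g T) / ?N ^ r) ^ j \<ge> ?N ^ r * (3 / 4 * (?N * ?p ^ r)) ^ j"
        using Np by (intro mult_left_mono) auto
      moreover have "?N ^ r * (3 / 4 * (?N * ?p ^ r)) ^ j = (3/4) ^ j * M"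
      proof -
        have q1: "(3 / 4 * (?N * ?p ^ r)) ^ j = (3/4) ^ j * (?N ^ j * (?p ^ r) ^ j)"
          by (simp only: power_mult_distrib)
        have q2: "(?p ^ r) ^ j = ?p ^ (j * r)" by (simp only: power_mult[symmetric] mult.commute)
        have q3: "?N ^ r * ?N ^ j = ?N ^ (j + r)" by (simp only: power_add[symmetric] add.commute)
        have "?N ^ r * (3 / 4 * (?N * ?p ^ r)) ^ j = (3/4) ^ j * ((?N ^ r * ?N ^ j) * (?p ^ r) ^ j)"
          unfolding q1 by (simp only: mult.assoc mult.left_commute)
        then show ?thesis unfolding M_def q2 q3 .
      qed
      ultimately show ?thesis by simp
    qed
    have c34: "1 / 2 ^ (j + 1) \<le> ((3::real)/4) ^ j"
    proof -
      have "(1/2::real) ^ (j + 1) \<le> (1/2) ^ j" by (rule power_decreasing) auto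
      also have "\<dots> \<le> (3/4) ^ j" by (rule power_mono) auto
      finally show ?thesis by (simp add: power_one_over)
    qed
    have "(1 / 2 ^ (j + 1) - \<beta>) * M \<le> (3/4) ^ j * M - \<beta> * M"
    proof -
      have "1 / 2 ^ (j + 1) * M \<le> (3/4) ^ j * M" by (rule mult_right_mono[OF c34 Mnn])
      then show ?thesis by (simp only: left_diff_distrib)
    qed
    also have "\<dots> \<le> (\<Sum>S \<in> {S \<in> seqs V j. distinct S \<and> good \<alpha> \<beta> h r V E i S}. ?f S ^ r)"
      using S1 S2 S3 S4 S6 by linarith
    finally show "(\<Sum>S \<in> {S \<in> seqs V j. distinct S \<and> good \<alpha> \<beta> h r V E i S}. ?f S ^ r)
           \<ge> (1 / 2 ^ (j + 1) - \<beta>) * ?N ^ (j + r) * ?p ^ (j * r)"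
      unfolding M_def by (simp add: mult.assoc)
  qed (use al in auto)
qed

end
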